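(* Let $u\in A^{\mathbb{N}}$ and $x\in\mathbb{P}\mathbb{R}_+^d$. If the worm $W(u)$ has non-empty interior for the topology $\mathcal{T}_x$, then $\pi_x(W(u))$ is bounded.
   Context: $A=\{0,\dots,d\}$, $h(y)=\sum_iy_i$, $P=\{h=0\}\subseteq\mathbb{R}^{d+1}$. $\mathbb{P}\mathbb{R}_+^d$ is the set of positive directions, $v(x)$ the $\ell^1$-normalized representative, $\pi_x(z)=z-h(z)v(x)$. $\mathbb{H}=\{z\in\mathbb{Z}^{d+1}:h(z)\ge0\}$; $\mathcal{T}_x$ is the topology on $\mathbb{H}$ whose open sets are $\pi_x^{-1}(U)\cap\mathbb{H}$ with $U\subseteq P$ open. $W(u)=\{\mathrm{ab}(p):p\text{ finite prefix of }u\}$, $\mathrm{ab}(p)$ counting letters. *)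

theory Defs
  imports "HOL-Analysis.Analysis"
begin

text \<open>The alphabet A = {0,...,d} is modelled by a finite type 'a (so d+1 = CARD('a)).
  Vectors of R^{d+1} are real^'a, those of Z^{d+1} are int^'a.\<close>

definition hsum :: "real^'a::finite \<Rightarrow> real" where
  "hsum y = (\<Sum>i\<in>UNIV. y $ i)"

definition hsum_int :: "int^'a::finite \<Rightarrow> int" where
  "hsum_int z = (\<Sum>i\<in>UNIV. z $ i)"

definition Pplane :: "(real^'a::finite) set" where
  "Pplane = {y. hsum y = 0}"

text \<open>Points of the projective set of positive directions are represented by
  nonzero vectors with nonnegative coordinates.\<close>
definition pos_dir :: "real^'a::finite \<Rightarrow> bool" where
  "pos_dir x \<longleftrightarrow> (\<forall>i. 0 \<le> x $ i) \<and> x \<noteq> 0"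

definition vrep :: "real^'a::finite \<Rightarrow> real^'a" where
  "vrep x = (1 / (\<Sum>i\<in>UNIV. \<bar>x $ i\<bar>)) *\<^sub>R x"

definition proj :: "real^'a::finite \<Rightarrow> real^'a \<Rightarrow> real^'a" where
  "proj x z = z - hsum z *\<^sub>R vrep x"

definition rvec :: "int^'a::finite \<Rightarrow> real^'a" where
  "rvec z = (\<chi> i. of_int (z $ i))"

definition Hset :: "(int^'a::finite) set" where
  "Hset = {z. hsum_int z \<ge> 0}"

definition Tx :: "real^'a::finite \<Rightarrow> (int^'a) topology" where
  "Tx x = pullback_topology Hset (\<lambda>z. proj x (rvec z)) (top_of_set Pplane)"

definition ab :: "'a::finite list \<Rightarrow> int^'a" where
  "ab p = (\<chi> i. int (count_list p i))"

definition worm :: "(nat \<Rightarrow> 'a::finite) \<Rightarrow> (int^'a) set" where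
  "worm u = {ab (map u [0..<n]) | n. True}"

end

theory Submission
  imports Defs
begin

lemma hsum_add: "hsum (a + b) = hsum a + hsum b"
  by (simp add: hsum_def sum.distrib)
lemma hsum_diff: "hsum (a - b) = hsum a - hsum b"
  by (simp add: hsum_def sum_subtractf)
lemma hsum_scale: "hsum (c *\<^sub>R a) = c * hsum a"
  by (simp add: hsum_def sum_distrib_left)
lemma rvec_add: "rvec (a + b) = rvec a + rvec b"
  by (simp add: rvec_def vec_eq_iff)
lemma hsum_rvec: "hsum (rvec z) = of_int (hsum_int z)"
  unfolding hsum_def hsum_int_def rvec_def by simp
lemma proj_add: "proj x (a + b) = proj x a + proj x b"
  by (simp add: proj_def hsum_add algebra_simps)
lemma hsum_vrep: assumes "pos_dir x" shows "hsum (vrep x) = 1"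
proof -
  have nn: "\<And>i. 0 \<le> x $ i" using assms by (simp add: pos_dir_def)
  have "(\<Sum>i\<in>UNIV. \<bar>x $ i\<bar>) = (\<Sum>i\<in>UNIV. x $ i)" using nn by simp
  moreover have "(\<Sum>i\<in>UNIV. x $ i) \<noteq> 0"
  proof
    assume "(\<Sum>i\<in>UNIV. x $ i) = 0"
    then have "\<forall>i\<in>UNIV. x $ i = 0" using nn by (simp add: sum_nonneg_eq_0_iff)
    then have "x = 0" by (simp add: vec_eq_iff)
    then show False using assms by (simp add: pos_dir_def)
  qed
  ultimately show ?thesis by (simp add: vrep_def hsum_scale hsum_def flip: sum_divide_distrib)
qed
lemma vrep_nn: assumes "pos_dir x" shows "0 \<le> vrep x $ i"
  using assms by (simp add: vrep_def pos_dir_def sum_nonneg)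
lemma norm_vrep: assumes "pos_dir x" shows "norm (vrep x) \<le> 1"
proof -
  have "norm (vrep x) \<le> (\<Sum>i\<in>UNIV. \<bar>vrep x $ i\<bar>)" by (rule norm_le_l1_cart)
  also have "\<dots> = hsum (vrep x)" using vrep_nn[OF assms] by (simp add: hsum_def)
  finally show ?thesis using hsum_vrep[OF assms] by simp
qed
lemma hsum_proj: assumes "pos_dir x" shows "hsum (proj x z) = 0"
  by (simp add: proj_def hsum_diff hsum_scale hsum_vrep[OF assms])

definition wn :: "(nat \<Rightarrow> 'a::finite) \<Rightarrow> nat \<Rightarrow> int^'a" where
  "wn u n = ab (map u [0..<n])"

lemma wn_Suc: "wn u (Suc n) = wn u n + (\<chi> i. if u n = i then 1 else 0)"
  by (simp add: wn_def ab_def vec_eq_iff)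
lemma wn_0: "wn u 0 = 0"
  by (simp add: wn_def ab_def vec_eq_iff)
lemma hsum_int_add: "hsum_int (a + b) = hsum_int a + hsum_int b"
  by (simp add: hsum_int_def sum.distrib)
lemma hsum_wn: "hsum_int (wn u n) = int n"
proof (induction n)
  case 0 then show ?case by (simp add: wn_0 hsum_int_def)
next
  case (Suc n)
  have "hsum_int (\<chi> i. if u n = i then (1::int) else 0) = 1"
    by (simp add: hsum_int_def)
  then show ?case by (simp add: wn_Suc hsum_int_add Suc)
qed
lemma worm_eq: "worm u = range (wn u)"
  by (auto simp: worm_def wn_def)

lemma step_bound: assumes "pos_dir x"
  shows "norm (proj x (rvec (wn u (Suc n))) - proj x (rvec (wn u n))) \<le> 2"
proof -
  let ?e = "(\<chi> i. if u n = i then (1::int) else 0)"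
  have "proj x (rvec (wn u (Suc n))) - proj x (rvec (wn u n)) = proj x (rvec ?e)"
    by (simp add: wn_Suc rvec_add proj_add)
  also have "\<dots> = rvec ?e - hsum (rvec ?e) *\<^sub>R vrep x" by (simp add: proj_def)
  finally have eq: "proj x (rvec (wn u (Suc n))) - proj x (rvec (wn u n)) = rvec ?e - vrep x"
    by (simp add: hsum_rvec hsum_int_def)
  have "norm (rvec ?e) \<le> (\<Sum>i\<in>UNIV. \<bar>rvec ?e $ i\<bar>)" by (rule norm_le_l1_cart)
  also have "\<dots> = (\<Sum>i\<in>UNIV. if u n = i then 1 else 0)"
    by (rule sum.cong) (auto simp: rvec_def)
  also have "\<dots> = 1" by simp
  finally have "norm (rvec ?e) \<le> 1" .
  then show ?thesis unfolding eq using norm_vrep[OF assms] norm_triangle_ineq4[of "rvec ?e" "vrep x"]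
    by linarith
qed

lemma lip_bound: assumes "pos_dir x"
  shows "norm (proj x (rvec (wn u (n + k))) - proj x (rvec (wn u n))) \<le> 2 * real k"
proof (induction k)
  case 0 then show ?case by simp
next
  case (Suc k)
  have "norm (proj x (rvec (wn u (n + Suc k))) - proj x (rvec (wn u n)))
     \<le> norm (proj x (rvec (wn u (Suc (n + k)))) - proj x (rvec (wn u (n+k))))
      + norm (proj x (rvec (wn u (n + k))) - proj x (rvec (wn u n)))"
    using norm_triangle_ineq[of "proj x (rvec (wn u (Suc (n + k)))) - proj x (rvec (wn u (n+k)))"
        "proj x (rvec (wn u (n + k))) - proj x (rvec (wn u n))"] by simp
  then show ?case using step_bound[OF assms, of u "n+k"] Suc by simp
qed

lemma rvec_0: "rvec 0 = 0" by (simp add: rvec_def vec_eq_iff)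
lemma proj_0: "proj x 0 = 0" by (simp add: proj_def hsum_def)

theorem lemma3p15:
  fixes u :: "nat \<Rightarrow> 'a::finite" and x :: "real^'a"
  assumes "pos_dir x"
    and "(Tx x) interior_of (worm u) \<noteq> {}"
  shows "bounded (proj x ` rvec ` worm u)"
proof -
  have px: "pos_dir x" by fact
  let ?p = "\<lambda>z. proj x (rvec z)"
  let ?v = "vrep x"
  obtain z0 where z0: "z0 \<in> (Tx x) interior_of (worm u)" using assms(2) by blast
  then obtain T where T: "openin (Tx x) T" "z0 \<in> T" "T \<subseteq> worm u" by (auto simp: interior_of_def)
  then obtain U' where U': "openin (top_of_set Pplane) U'" "T = ?p -` U' \<inter> Hset"
    unfolding Tx_def openin_pullback_topology by blast
  then obtain U where U: "open U" "U' = U \<inter> Pplane" by (auto simp: openin_open)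
  have "?p z0 \<in> U" using T(2) U' U by auto
  then obtain r where r: "r > 0" "ball (?p z0) r \<subseteq> U" using U(1) open_contains_ball by blast
  obtain n0 where n0: "z0 = wn u n0" using T(3) T(2) unfolding worm_eq by auto
  have key: "z \<in> worm u" if "hsum_int z \<ge> 0" "dist (?p z) (?p z0) < r" for z
  proof -
    have "?p z \<in> U'" using r that U hsum_proj[OF px] by (auto simp: Pplane_def dist_commute)
    then have "z \<in> T" using U' that by (auto simp: Hset_def)
    then show ?thesis using T(3) by auto
  qed
  have level: "z = wn u (nat (hsum_int z))" if "z \<in> worm u" for z
    using that unfolding worm_eq by (auto simp: hsum_wn)
  define N where "N = CARD('a)"
  have N: "N \<ge> 1" unfolding N_def by (simp add: Suc_leI)
  define \<delta> where "\<delta> = min r 1 / (2 * real N)"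
  have dpos: "\<delta> > 0" using N r by (simp add: \<delta>_def)
  have dN: "real N * \<delta> \<le> min r 1 / 2" using N by (simp add: \<delta>_def)
  define f where "f = (\<lambda>m::nat. (\<chi> i. frac (real m * ?v $ i)) :: real^'a)"
  have bf: "bounded (range f)"
  proof -
    have "norm (f m) \<le> real N" for m
    proof -
      have "norm (f m) \<le> (\<Sum>i\<in>UNIV. \<bar>f m $ i\<bar>)" by (rule norm_le_l1_cart)
      also have "\<dots> \<le> (\<Sum>i\<in>(UNIV::'a set). 1)"
        by (rule sum_mono) (simp add: f_def frac_lt_1 less_imp_le)
      finally show ?thesis by (simp add: N_def)
    qed
    then show ?thesis unfolding bounded_iff by blast
  qed
  have cf: "compact (closure (range f))" using bf compact_closure by blast
  have cov: "closure (range f) \<subseteq> (\<Union>k\<in>UNIV. ball (f k) \<delta>)"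
  proof
    fix y assume "y \<in> closure (range f)"
    then obtain y' where "y' \<in> range f" "dist y' y < \<delta>" using closure_approachable dpos by blast
    then show "y \<in> (\<Union>k\<in>UNIV. ball (f k) \<delta>)" by auto
  qed
  obtain F where F0: "F \<subseteq> UNIV" and F: "finite F" "closure (range f) \<subseteq> (\<Union>k\<in>F. ball (f k) \<delta>)"
    apply (rule compactE_image[OF cf _ cov])
     apply (rule open_ball)
    apply assumption
    done
  define K where "K = Max (insert 0 F)"
  have FK: "k \<le> K" if "k \<in> F" for k using F(1) that by (simp add: K_def)
  define C where "C = norm (?p z0) + r"
  have good: "norm (?p (wn u (n0 + j))) \<le> C" if "dist (f (j + k)) (f k) < \<delta>" for j k
  proof -
    define t :: "int^'a" where "t = (\<chi> i. \<lfloor>real (j+k) * ?v $ i\<rfloor> - \<lfloor>real k * ?v $ i\<rfloor>)"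
    have comp: "\<bar>rvec t $ i - real j * ?v $ i\<bar> < \<delta>" for i
    proof -
      have "\<bar>f (j+k) $ i - f k $ i\<bar> < \<delta>"
        using that component_le_norm_cart[of "f (j+k) - f k" i] by (simp add: dist_norm)
      moreover have "rvec t $ i - real j * ?v $ i = - (f (j+k) $ i - f k $ i)"
        by (simp add: t_def rvec_def f_def frac_def algebra_simps)
      ultimately show ?thesis by simp
    qed
    have sumb: "(\<Sum>i\<in>UNIV. \<bar>rvec t $ i - real j * ?v $ i\<bar>) \<le> real N * \<delta>"
      using sum_mono[of UNIV "\<lambda>i. \<bar>rvec t $ i - real j * ?v $ i\<bar>" "\<lambda>_. \<delta>"] comp
      by (simp add: N_def less_imp_le)
    have hs: "\<bar>hsum (rvec t) - real j\<bar> < 1"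
    proof -
      have "hsum (rvec t) - real j = (\<Sum>i\<in>UNIV. rvec t $ i - real j * ?v $ i)"
        using hsum_vrep[OF px] by (simp add: hsum_def sum_subtractf flip: sum_distrib_left)
      also have "\<bar>\<dots>\<bar> \<le> (\<Sum>i\<in>UNIV. \<bar>rvec t $ i - real j * ?v $ i\<bar>)" by (rule sum_abs)
      finally show ?thesis using sumb dN by linarith
    qed
    have ht: "hsum_int t = int j"
    proof -
      have "real_of_int \<bar>hsum_int t - int j\<bar> < 1" using hs by (simp add: hsum_rvec)
      then have "\<bar>hsum_int t - int j\<bar> < 1" by (simp only: of_int_less_1_iff)
      then show ?thesis by arith
    qed
    have pt: "?p t = rvec t - real j *\<^sub>R ?v" using ht by (simp add: proj_def hsum_rvec)
    have npt: "norm (?p t) < r"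
    proof -
      have "norm (?p t) \<le> (\<Sum>i\<in>UNIV. \<bar>?p t $ i\<bar>)" by (rule norm_le_l1_cart)
      also have "\<dots> = (\<Sum>i\<in>UNIV. \<bar>rvec t $ i - real j * ?v $ i\<bar>)" by (simp add: pt)
      finally show ?thesis using sumb dN r by linarith
    qed
    let ?z = "z0 + t"
    have hz: "hsum_int ?z = int (n0 + j)" by (simp add: n0 hsum_wn ht hsum_int_add)
    have pz: "?p ?z = ?p z0 + ?p t" by (simp add: rvec_add proj_add)
    have "?z \<in> worm u" apply (rule key) using hz pz npt by (auto simp: dist_norm)
    then have "?z = wn u (n0 + j)" using level hz by (metis nat_int)
    then have "?p (wn u (n0+j)) = ?p z0 + ?p t" using pz by simp
    then show ?thesis using npt norm_triangle_ineq[of "?p z0" "?p t"] unfolding C_def by simp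
  qed
  have allb: "norm (?p (wn u n)) \<le> max (2 * real (n0 + K)) (C + 2 * real K)" for n
  proof (cases "n < n0 + K")
    case True
    have "norm (?p (wn u n)) \<le> 2 * real n" using lip_bound[OF px, of u 0 n] by (simp add: wn_0 rvec_0 proj_0)
    then show ?thesis using True by simp
  next
    case False
    define m where "m = n - n0"
    have "f m \<in> closure (range f)" by (rule closure_subset[THEN subsetD]) simp
    then have "f m \<in> (\<Union>k\<in>F. ball (f k) \<delta>)" using F(2) by (rule rev_subsetD)
    then obtain k where k: "k \<in> F" "f m \<in> ball (f k) \<delta>" by (rule UN_E)
    then have kd: "dist (f k) (f m) < \<delta>" by simp
    have kK: "k \<le> K" using FK k by simp
    define j where "j = m - k"
    have mjk: "m = j + k" using False kK m_def j_def by simp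
    have "norm (?p (wn u (n0 + j))) \<le> C" using good[of j k] kd mjk by (simp add: dist_commute)
    moreover have "norm (?p (wn u (n0 + j + k)) - ?p (wn u (n0 + j))) \<le> 2 * real k"
      using lip_bound[OF px, of u "n0+j" k] .
    moreover have "n = n0 + j + k" using mjk m_def False by simp
    ultimately have "norm (?p (wn u n)) \<le> C + 2 * real k"
      using norm_triangle_ineq2[of "?p (wn u n)" "?p (wn u (n0 + j))"] by simp
    then show ?thesis using kK by simp
  qed
  have "\<forall>y\<in>proj x ` rvec ` worm u. norm y \<le> max (2 * real (n0 + K)) (C + 2 * real K)"
    unfolding worm_eq using allb by auto
  then show ?thesis unfolding bounded_iff by (rule exI)
qed

end
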